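(* Let $1\le d<n$, $r=d(n-d)$. (i) For $\underline i,\underline j\in I(d,n)$, $\underline i\le\underline j$ if and only if $\underline j$ can be obtained from $\underline i$ by applying a suitable monomial in the root operators $f_{s,h}$. (ii) Let $\mathfrak C:\underline i_r>\cdots>\underline i_0$ be a maximal chain in $I(d,n)$. Then for each $t=1,\dots,r$ there exist $s_t,h_t$ with $\underline i_t=f_{s_t,h_t}(\underline i_{t-1})$; moreover each root operator $f_{s,h}$ with $1\le s\le n-1$, $1\le h\le d$, $n-d+h>s\ge h$ appears in the list $(f_{s_t,h_t}\mid t=1,\dots,r)$ exactly once. (iii) If moreover $\underline i_h$ does not contain $n$ for $h=1,\dots,t$ and $\underline i_h$ contains $n$ for all $t<h\le r$, then $\underline i_{t+1}=f_{n-1,d}(\underline i_t)$, i.e. $s_{t+1}=n-1$ and $h_{t+1}=d$.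
   Context: $I(d,n)$ is the set of $d$-element subsets of $\{1,\dots,n\}$ written as increasing sequences $i_1\cdots i_d$, with partial order $\underline i\le\underline j$ iff $i_k\le j_k$ for all $k$. Maximal chains are maximal totally ordered subsets; they have the form $\underline i_r>\cdots>\underline i_0$ from $(n-d+1)\cdots n$ down to $12\cdots d$. For $1\le h\le d$ and $h\le s<n-d+h$, $f_{s,h}$ acts on $I(d,n)\sqcup\{0\}$ by $f_{s,h}(0)=0$, $f_{s,h}(i_1\cdots i_d)=i_1\cdots i_{h-1}(s+1)i_{h+1}\cdots i_d$ if $i_h=s$ and ($h=d$ or $i_{h+1}\ge s+2$), and $0$ otherwise. *)

theory Defs
  imports Main
begin

text \<open>An element i_1 ... i_d of I(d,n) is represented as the strictly increasing
  list [i_1, ..., i_d] (so i_k is xs ! (k-1)).\<close>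

definition Idn :: "nat \<Rightarrow> nat \<Rightarrow> nat list set" where
  "Idn d n = {xs. length xs = d \<and> sorted_wrt (<) xs \<and> set xs \<subseteq> {1..n}}"

definition leI :: "nat list \<Rightarrow> nat list \<Rightarrow> bool" where
  "leI xs ys \<longleftrightarrow> length xs = length ys \<and> (\<forall>k<length xs. xs ! k \<le> ys ! k)"

definition root_valid :: "nat \<Rightarrow> nat \<Rightarrow> nat \<Rightarrow> nat \<Rightarrow> bool" where
  "root_valid d n s h \<longleftrightarrow> 1 \<le> h \<and> h \<le> d \<and> h \<le> s \<and> s < n - d + h"

text \<open>Root operator f_{s,h} on I(d,n) with an extra element 0, here None.\<close>
fun root_op :: "nat \<Rightarrow> nat \<Rightarrow> nat \<Rightarrow> nat list option \<Rightarrow> nat list option" where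
  "root_op d s h None = None"
| "root_op d s h (Some xs) =
     (if xs ! (h - 1) = s \<and> (h = d \<or> xs ! h \<ge> s + 2)
      then Some (xs[h - 1 := s + 1]) else None)"

text \<open>Monomial in root operators, given by the list of its factors (applied right to left).\<close>
fun apply_monomial :: "nat \<Rightarrow> (nat \<times> nat) list \<Rightarrow> nat list option \<Rightarrow> nat list option" where
  "apply_monomial d [] x = x"
| "apply_monomial d ((s, h) # ms) x = root_op d s h (apply_monomial d ms x)"

definition is_chain :: "nat \<Rightarrow> nat \<Rightarrow> nat list set \<Rightarrow> bool" where
  "is_chain d n C \<longleftrightarrow> C \<subseteq> Idn d n \<and> (\<forall>x\<in>C. \<forall>y\<in>C. leI x y \<or> leI y x)"

definition is_maximal_chain :: "nat \<Rightarrow> nat \<Rightarrow> nat list set \<Rightarrow> bool" where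
  "is_maximal_chain d n C \<longleftrightarrow> is_chain d n C \<and> (\<forall>D. is_chain d n D \<and> C \<subseteq> D \<longrightarrow> D = C)"

end

theory Submission
  imports Defs
begin

lemma Idn_nth: "xs \<in> Idn d n \<longleftrightarrow> length xs = d \<and> (\<forall>a b. a < b \<longrightarrow> b < d \<longrightarrow> xs!a < xs!b)
   \<and> (\<forall>a<d. 1 \<le> xs!a \<and> xs!a \<le> n)"
  unfolding Idn_def sorted_wrt_iff_nth_less
  by (auto simp: set_conv_nth)

lemma strict_gap:
  assumes "\<forall>a b. a < b \<longrightarrow> b < d \<longrightarrow> (xs::nat list)!a < xs!b" "i \<le> j" "j < d"
  shows "xs!i + (j - i) \<le> xs!j"
  using assms(2,3)
proof (induction j)
  case 0 then show ?case by simp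
next
  case (Suc j)
  show ?case
  proof (cases "i = Suc j")
    case False
    then have "i \<le> j" using Suc by simp
    then have "xs!i + (j - i) \<le> xs!j" using Suc by simp
    moreover have "xs!j < xs!Suc j" using assms(1) Suc by simp
    ultimately show ?thesis using \<open>i \<le> j\<close> by simp
  qed simp
qed

lemma idn_lower: assumes "xs \<in> Idn d n" "k < d" shows "k + 1 \<le> xs!k"
proof -
  have "xs!0 + (k - 0) \<le> xs!k" using strict_gap[of d xs 0 k] assms by (auto simp: Idn_nth)
  moreover have "1 \<le> xs!0" using assms by (auto simp: Idn_nth)
  ultimately show ?thesis by simp
qed

lemma idn_upper: assumes "xs \<in> Idn d n" "k < d" shows "xs!k + d \<le> n + k + 1"
proof -
  have "xs!k + (d - 1 - k) \<le> xs!(d-1)" using strict_gap[of d xs k "d - 1"] assms by (auto simp: Idn_nth)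
  moreover have "xs!(d-1) \<le> n" using assms by (auto simp: Idn_nth)
  ultimately show ?thesis using assms(2) by simp
qed

lemma leI_refl: "leI a a" by (simp add: leI_def)
lemma leI_trans: "leI a b \<Longrightarrow> leI b c \<Longrightarrow> leI a c"
  unfolding leI_def by (metis order_trans)

lemma sum_nth: "sum_list (xs::nat list) = (\<Sum>k<length xs. xs!k)"
  by (simp add: sum_list_sum_nth atLeast0LessThan)

lemma leI_sum: "leI a b \<Longrightarrow> sum_list (a::nat list) \<le> sum_list b"
  unfolding leI_def sum_nth by (auto intro: sum_mono)

lemma leI_sum_strict: assumes "leI a b" "a \<noteq> b" shows "sum_list (a::nat list) < sum_list b"
proof -
  have L: "length a = length b" and le: "\<forall>k<length a. a!k \<le> b!k" using assms(1) by (auto simp: leI_def)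
  obtain k where k: "k < length a" "a!k \<noteq> b!k" using assms(2) L nth_equalityI by blast
  have "(\<Sum>k<length a. a!k) < (\<Sum>k<length a. b!k)"
    by (rule sum_strict_mono_ex1) (use le k in \<open>auto intro!: bexI[of _ k]\<close>)
  then show ?thesis by (simp add: sum_nth L)
qed

lemma step_char:
  assumes "leI a b" "sum_list b = Suc (sum_list (a::nat list))"
  shows "\<exists>k<length a. b = a[k := a!k+1]"
proof -
  have L: "length a = length b" and le: "\<forall>k<length a. a!k \<le> b!k" using assms(1) by (auto simp: leI_def)
  have "a \<noteq> b" using assms(2) by auto
  then obtain k where k: "k < length a" "a!k \<noteq> b!k" using L nth_equalityI by blast
  define g where "g = a[k := a!k+1]"
  have "leI g b" using le k L unfolding g_def leI_def by (auto simp: nth_list_update)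
  moreover have "sum_list g = sum_list b" using assms(2) k unfolding g_def
    by (simp add: sum_list_update)
  ultimately have "g = b" using leI_sum_strict by fastforce
  then show ?thesis using k g_def by blast
qed

lemma apply_append: "apply_monomial d (ms @ ms') x = apply_monomial d ms (apply_monomial d ms' x)"
  by (induction ms) auto

lemma mono_leI: "apply_monomial d ms (Some i) = Some j \<Longrightarrow> leI i j"
proof (induction ms arbitrary: j)
  case Nil then show ?case by (simp add: leI_refl)
next
  case (Cons x ms)
  obtain s h where x: "x = (s,h)" by force
  obtain y where y: "apply_monomial d ms (Some i) = Some y"
    using Cons.prems x by (cases "apply_monomial d ms (Some i)") auto
  have j: "j = y[h - 1 := s + 1]" "y!(h-1) = s" using Cons.prems x y by (auto split: if_splits)
  have "leI y j" unfolding leI_def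
  proof (intro conjI allI impI)
    fix k assume "k < length y"
    then show "y!k \<le> j!k" using j by (cases "k = h - 1") auto
  qed (simp add: j)
  then show ?case using Cons.IH[OF y] leI_trans by blast
qed

lemma exists_monomial:
  assumes "i \<in> Idn d n" "j \<in> Idn d n" "leI i j" "d < n"
  shows "\<exists>ms. (\<forall>(s, h)\<in>set ms. root_valid d n s h) \<and> apply_monomial d ms (Some i) = Some j"
  using assms
proof (induction "sum_list j - sum_list i" arbitrary: i rule: less_induct)
  case less
  show ?case
  proof (cases "i = j")
    case True
    then show ?thesis by (intro exI[of _ "[]"]) auto
  next
    case False
    have Li: "length i = d" and Lj: "length j = d" using less.prems by (auto simp: Idn_nth)
    have le: "\<forall>k<d. i!k \<le> j!k" using less.prems(3) Li by (auto simp: leI_def)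
    define K where "K = {k. k < d \<and> i!k < j!k}"
    have "K \<noteq> {}" using False Li Lj le nth_equalityI unfolding K_def
      by (metis (mono_tags, lifting) empty_Collect_eq nat_less_le)
    moreover have "finite K" unfolding K_def by simp
    ultimately have kK: "Max K \<in> K" and kmax: "\<And>x. x \<in> K \<Longrightarrow> x \<le> Max K" by auto
    define k where "k = Max K"
    have k: "k < d" "i!k < j!k" using kK k_def K_def by auto
    have above: "\<And>b. k < b \<Longrightarrow> b < d \<Longrightarrow> i!b = j!b"
      using kmax le unfolding K_def k_def by (metis (no_types, lifting) mem_Collect_eq not_le order_le_less)
    define i' where "i' = i[k := i!k + 1]"
    have i'nth: "\<And>x. i'!x = (if x = k then i!k + 1 else i!x)" using k Li unfolding i'_def by auto
    have Ii: "\<forall>a b. a < b \<longrightarrow> b < d \<longrightarrow> i!a < i!b" "\<forall>a<d. 1 \<le> i!a \<and> i!a \<le> n"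
      using less.prems(1) by (auto simp: Idn_nth)
    have Ij: "\<forall>a b. a < b \<longrightarrow> b < d \<longrightarrow> j!a < j!b" "\<forall>a<d. 1 \<le> j!a \<and> j!a \<le> n"
      using less.prems(2) by (auto simp: Idn_nth)
    have i'I: "i' \<in> Idn d n"
      unfolding Idn_nth
    proof (intro conjI)
      show "length i' = d" using Li i'_def by simp
    next
      show "\<forall>a b. a < b \<longrightarrow> b < d \<longrightarrow> i'!a < i'!b"
      proof (intro allI impI)
      fix a b assume ab: "a < (b::nat)" "b < d"
      show "i'!a < i'!b"
      proof (cases "a = k")
        case True
        then have "i!b = j!b" using above ab by simp
        moreover have "j!k < j!b" using Ij ab True by simp
        ultimately show ?thesis using i'nth True ab k by simp
      next
        case False
        then show ?thesis using i'nth Ii ab by (cases "b = k") (auto, metis less_SucI)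
      qed
      qed
    next
      show "\<forall>a<d. 1 \<le> i'!a \<and> i'!a \<le> n"
      proof (intro allI impI)
      fix a assume "a < d"
      then show "1 \<le> i'!a \<and> i'!a \<le> n" 
      proof (cases "a = k")
        case True
        have "j!k \<le> n" using Ij k by auto
        then show ?thesis using True i'nth k by simp
      next
        case False
        then show ?thesis using i'nth Ii \<open>a < d\<close> by simp
      qed
      qed
    qed
    have lei': "leI i' j" unfolding leI_def using Li Lj le i'nth k by (auto simp: i'_def)
    have "sum_list i' = Suc (sum_list i)" using k Li unfolding i'_def by (simp add: sum_list_update)
    moreover have "sum_list i' \<le> sum_list j" using leI_sum[OF lei'] .
    ultimately have "sum_list j - sum_list i' < sum_list j - sum_list i" by simp
    from less.hyps[OF this i'I less.prems(2) lei' less.prems(4)]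
    obtain ms where ms: "\<forall>(s, h)\<in>set ms. root_valid d n s h" "apply_monomial d ms (Some i') = Some j" by blast
    have rv: "root_valid d n (i!k) (k+1)"
      using idn_lower[OF less.prems(1) k(1)] idn_upper[OF less.prems(2) k(1)] k less.prems(4)
      unfolding root_valid_def by simp
    have cond: "k + 1 = d \<or> i!(k+1) \<ge> i!k + 2"
    proof (cases "k + 1 = d")
      case False
      then have "k + 1 < d" using k by simp
      then have "i!(k+1) = j!(k+1)" "j!k < j!(k+1)" using above Ij by auto
      then show ?thesis using k by simp
    qed simp
    have "root_op d (i!k) (k+1) (Some i) = Some i'" using cond unfolding i'_def by auto
    then have "apply_monomial d (ms @ [(i!k, k+1)]) (Some i) = Some j"
      by (simp add: apply_append ms(2))
    moreover have "\<forall>(s, h)\<in>set (ms @ [(i!k, k+1)]). root_valid d n s h" using ms(1) rv by auto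
    ultimately show ?thesis by blast
  qed
qed


lemma chain_part:
  fixes d n r :: nat and c :: "nat \<Rightarrow> nat list"
  assumes d1: "1 \<le> d" and dn: "d < n" and rdef: "r = d * (n - d)"
    and A: "\<forall>t\<in>{1..r}. leI (c (t - 1)) (c t) \<and> c (t - 1) \<noteq> c t"
    and M: "is_maximal_chain d n (c ` {0..r})"
  shows "(\<exists>sf hf :: nat \<Rightarrow> nat.
          (\<forall>t\<in>{1..r}. root_valid d n (sf t) (hf t) \<and>
                        Some (c t) = root_op d (sf t) (hf t) (Some (c (t - 1))))
        \<and> (\<forall>s h. 1 \<le> s \<and> s \<le> n - 1 \<and> 1 \<le> h \<and> h \<le> d \<and> s < n - d + h \<and> h \<le> s \<longrightarrow>
                 (\<exists>!t. t \<in> {1..r} \<and> sf t = s \<and> hf t = h)))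
       \<and>
       (\<forall>t. (\<forall>k\<in>{1..t}. n \<notin> set (c k)) \<and> (\<forall>k. t < k \<and> k \<le> r \<longrightarrow> n \<in> set (c k)) \<longrightarrow>
            Some (c (t + 1)) = root_op d (n - 1) d (Some (c t)))"
proof -
  have CI: "\<And>t. t \<le> r \<Longrightarrow> c t \<in> Idn d n"
    using M unfolding is_maximal_chain_def is_chain_def by auto
  have LEN: "\<And>t. t \<le> r \<Longrightarrow> length (c t) = d" using CI by (auto simp: Idn_def)
  have A1: "\<And>t. 1 \<le> t \<Longrightarrow> t \<le> r \<Longrightarrow> leI (c (t - 1)) (c t) \<and> c (t - 1) \<noteq> c t"
    using A by auto
  have mono: "\<And>a b. a \<le> b \<Longrightarrow> b \<le> r \<Longrightarrow> leI (c a) (c b)"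
  proof -
    fix a b :: nat assume "a \<le> b" "b \<le> r"
    then show "leI (c a) (c b)"
    proof (induction b)
      case 0 then show ?case by (simp add: leI_refl)
    next
      case (Suc b)
      show ?case
      proof (cases "a = Suc b")
        case True then show ?thesis by (simp add: leI_refl)
      next
        case False
        then have "leI (c a) (c b)" using Suc by simp
        moreover have "leI (c b) (c (Suc b))" using A1[of "Suc b"] Suc by simp
        ultimately show ?thesis using leI_trans by blast
      qed
    qed
  qed
  have G: "\<And>a b. a \<le> b \<Longrightarrow> b \<le> r \<Longrightarrow> sum_list (c a) + (b - a) \<le> sum_list (c b)"
  proof -
    fix a b :: nat assume "a \<le> b" "b \<le> r"
    then show "sum_list (c a) + (b - a) \<le> sum_list (c b)"
    proof (induction b)
      case 0 then show ?case by simp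
    next
      case (Suc b)
      show ?case
      proof (cases "a = Suc b")
        case True then show ?thesis by simp
      next
        case False
        then have "sum_list (c a) + (b - a) \<le> sum_list (c b)" using Suc by simp
        moreover have "sum_list (c b) < sum_list (c (Suc b))"
          using A1[of "Suc b"] Suc leI_sum_strict by simp
        ultimately show ?thesis using False Suc.prems by simp
      qed
    qed
  qed
  have B0: "(\<Sum>k<d. k + 1) \<le> sum_list (c 0)"
    unfolding sum_nth LEN[OF le0] using idn_lower[OF CI[OF le0]] by (auto intro: sum_mono)
  have UP: "\<And>k. k < d \<Longrightarrow> c r ! k \<le> n - d + k + 1"
  proof -
    fix k assume "k < d"
    then have "c r ! k + d \<le> n + k + 1" using idn_upper[OF CI[OF order_refl]] by blast
    then show "c r ! k \<le> n - d + k + 1" using dn by linarith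
  qed
  have Br: "sum_list (c r) \<le> (\<Sum>k<d. n - d + k + 1)"
    unfolding sum_nth LEN[OF order_refl] using UP by (intro sum_mono) simp
  have Rs: "(\<Sum>k<d. n - d + k + 1) = r + (\<Sum>k<d. k + 1)"
  proof -
    have "(\<Sum>k<d. n - d + k + 1) = (\<Sum>k<d. (n - d) + (k + 1))" by (simp add: add.assoc)
    also have "\<dots> = r + (\<Sum>k<d. k + 1)" unfolding rdef by (simp only: sum.distrib) simp
    finally show ?thesis .
  qed
  have Gr: "sum_list (c 0) + r \<le> sum_list (c r)" using G[of 0 r] by simp
  have E0: "sum_list (c 0) = (\<Sum>k<d. k + 1)" and Er: "sum_list (c r) = r + (\<Sum>k<d. k + 1)"
    using B0 Br Rs Gr by linarith+
  have bot: "\<And>k. k < d \<Longrightarrow> c 0 ! k = k + 1"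
  proof (rule ccontr)
    fix k assume k: "k < d" "c 0 ! k \<noteq> k + 1"
    have "(\<Sum>k<d. k + 1) < (\<Sum>k<d. c 0 ! k)"
      by (rule sum_strict_mono_ex1) (use k idn_lower[OF CI[OF le0]] in \<open>auto intro!: bexI[of _ k] simp: le_neq_implies_less\<close>)
    then show False using E0 unfolding sum_nth LEN[OF le0] by simp
  qed
  have top: "\<And>k. k < d \<Longrightarrow> c r ! k = n - d + k + 1"
  proof (rule ccontr)
    fix k assume k: "k < d" "c r ! k \<noteq> n - d + k + 1"
    have "(\<Sum>k<d. c r ! k) < (\<Sum>k<d. n - d + k + 1)"
      by (rule sum_strict_mono_ex1) (use k UP in \<open>auto intro!: bexI[of _ k] simp: le_neq_implies_less\<close>)
    then show False using Er Rs unfolding sum_nth LEN[OF order_refl] by simp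
  qed
  have stepsum: "\<And>t. 1 \<le> t \<Longrightarrow> t \<le> r \<Longrightarrow> sum_list (c t) = Suc (sum_list (c (t - 1)))"
  proof -
    fix t :: nat assume t: "1 \<le> t" "t \<le> r"
    have "sum_list (c 0) + (t - 1) \<le> sum_list (c (t - 1))" using G[of 0 "t - 1"] t by simp
    moreover have "sum_list (c t) + (r - t) \<le> sum_list (c r)" using G[of t r] t by simp
    moreover have "sum_list (c (t - 1)) < sum_list (c t)" using A1[OF t] leI_sum_strict by blast
    ultimately show "sum_list (c t) = Suc (sum_list (c (t - 1)))" using E0 Er t by linarith
  qed
  have ex_p: "\<And>t. 1 \<le> t \<Longrightarrow> t \<le> r \<Longrightarrow> \<exists>k<d. c t = (c (t - 1))[k := c (t - 1) ! k + 1]"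
    using step_char A1 stepsum LEN by (metis diff_le_self le_trans)
  define p where "p t = (SOME k. k < d \<and> c t = (c (t - 1))[k := c (t - 1) ! k + 1])" for t
  have P: "\<And>t. 1 \<le> t \<Longrightarrow> t \<le> r \<Longrightarrow> p t < d \<and> c t = (c (t - 1))[p t := c (t - 1) ! p t + 1]"
    unfolding p_def using ex_p by (rule someI_ex) (simp_all)
  define sf where "sf t = c (t - 1) ! p t" for t
  define hf where "hf t = p t + 1" for t
  have UPD: "\<And>t k. 1 \<le> t \<Longrightarrow> t \<le> r \<Longrightarrow> k < d \<Longrightarrow>
      c t ! k = c (t - 1) ! k + (if p t = k then 1 else 0)"
  proof -
    fix t k :: nat assume t: "1 \<le> t" "t \<le> r" and k: "k < d"
    have "length (c (t - 1)) = d" using LEN t by simp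
    then show "c t ! k = c (t - 1) ! k + (if p t = k then 1 else 0)"
      using P[OF t] k by (cases "p t = k") auto
  qed
  have RO: "\<And>t. 1 \<le> t \<Longrightarrow> t \<le> r \<Longrightarrow> root_valid d n (sf t) (hf t) \<and>
                        Some (c t) = root_op d (sf t) (hf t) (Some (c (t - 1)))"
  proof -
    fix t :: nat assume t: "1 \<le> t" "t \<le> r"
    define a where "a = c (t - 1)"
    define k where "k = p t"
    have k: "k < d" and b: "c t = a[k := a ! k + 1]" using P[OF t] unfolding a_def k_def by auto
    have aI: "a \<in> Idn d n" using CI t unfolding a_def by simp
    have bI: "c t \<in> Idn d n" using CI t by simp
    have bk: "c t ! k = a ! k + 1" using UPD[OF t k] unfolding a_def k_def by simp
    have rv: "root_valid d n (a ! k) (k + 1)"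
      using idn_lower[OF aI k] idn_upper[OF bI k] bk k dn unfolding root_valid_def by simp
    have cond: "k + 1 = d \<or> a ! (k+1) \<ge> a ! k + 2"
    proof (cases "k + 1 = d")
      case False
      then have k1: "k + 1 < d" using k by simp
      have "c t ! k < c t ! (k+1)" using bI k1 by (auto simp: Idn_nth)
      moreover have "c t ! (k+1) = a ! (k+1)" using UPD[OF t k1] unfolding a_def k_def by simp
      ultimately show ?thesis using bk by simp
    qed simp
    have "root_op d (a ! k) (k + 1) (Some a) = Some (c t)" using cond b by simp
    then show "root_valid d n (sf t) (hf t) \<and> Some (c t) = root_op d (sf t) (hf t) (Some (c (t - 1)))"
      using rv unfolding sf_def hf_def a_def k_def by simp
  qed
  have VM: "\<And>a b k. a \<le> b \<Longrightarrow> b \<le> r \<Longrightarrow> k < d \<Longrightarrow> c a ! k \<le> c b ! k"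
    using mono LEN unfolding leI_def by (metis le_trans)
  have UNI: "\<forall>s h. 1 \<le> s \<and> s \<le> n - 1 \<and> 1 \<le> h \<and> h \<le> d \<and> s < n - d + h \<and> h \<le> s \<longrightarrow>
                 (\<exists>!t. t \<in> {1..r} \<and> sf t = s \<and> hf t = h)"
  proof (intro allI impI)
    fix s h assume sh: "1 \<le> s \<and> s \<le> n - 1 \<and> 1 \<le> h \<and> h \<le> d \<and> s < n - d + h \<and> h \<le> s"
    define k where "k = h - 1"
    have k: "k < d" "h = k + 1" using sh unfolding k_def by auto
    define v where "v t = c t ! k" for t
    have v0: "v 0 \<le> s" using bot[OF k(1)] sh k unfolding v_def by simp
    have vr: "s < v r" using top[OF k(1)] sh k unfolding v_def by simp
    define t0 where "t0 = (LEAST t. s < v t)"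
    have t0a: "s < v t0" unfolding t0_def using vr by (rule LeastI)
    have t0r: "t0 \<le> r" unfolding t0_def using vr by (rule Least_le)
    have t01: "1 \<le> t0" using t0a v0 by (cases t0) auto
    have t0b: "\<not> s < v (t0 - 1)" unfolding t0_def
      by (rule not_less_Least) (use t01 t0_def in auto)
    have vstep: "v t0 = v (t0 - 1) + (if p t0 = k then 1 else 0)" using UPD[OF t01 t0r k(1)] unfolding v_def .
    then have pk: "p t0 = k" and vs: "v (t0 - 1) = s" using t0a t0b by (auto split: if_splits)
    have T0: "t0 \<in> {1..r} \<and> sf t0 = s \<and> hf t0 = h" using t01 t0r pk vs k unfolding sf_def hf_def v_def by simp
    show "\<exists>!t. t \<in> {1..r} \<and> sf t = s \<and> hf t = h"
    proof (rule ex1I[of _ t0])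
      show "t0 \<in> {1..r} \<and> sf t0 = s \<and> hf t0 = h" by (rule T0)
    next
      have key: "\<And>t1 t2. t1 \<in> {1..r} \<and> sf t1 = s \<and> hf t1 = h \<Longrightarrow> t2 \<in> {1..r} \<and> sf t2 = s \<and> hf t2 = h
          \<Longrightarrow> \<not> t1 < t2"
      proof
        fix t1 t2 assume H1: "t1 \<in> {1..r} \<and> sf t1 = s \<and> hf t1 = h" and H2: "t2 \<in> {1..r} \<and> sf t2 = s \<and> hf t2 = h"
          and lt: "t1 < t2"
        have p1: "p t1 = k" "c (t1 - 1) ! k = s" using H1 k unfolding sf_def hf_def by auto
        have p2: "c (t2 - 1) ! k = s" using H2 k unfolding sf_def hf_def by auto
        have "c t1 ! k = s + 1" using UPD[of t1 k] H1 p1 k by simp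
        moreover have "c t1 ! k \<le> c (t2 - 1) ! k" proof (rule VM)
          show "t1 \<le> t2 - 1" using lt by simp
          show "t2 - 1 \<le> r" using H2 by auto
        qed (rule k)
        ultimately show False using p2 by simp
      qed
      fix t assume "t \<in> {1..r} \<and> sf t = s \<and> hf t = h"
      then show "t = t0" using key[of t t0] key[of t0 t] T0
        by (meson linorder_neqE_nat)
    qed
  qed
  have III: "\<forall>t. (\<forall>k\<in>{1..t}. n \<notin> set (c k)) \<and> (\<forall>k. t < k \<and> k \<le> r \<longrightarrow> n \<in> set (c k)) \<longrightarrow>
            Some (c (t + 1)) = root_op d (n - 1) d (Some (c t))"
  proof (intro allI impI)
    fix t assume H: "(\<forall>k\<in>{1..t}. n \<notin> set (c k)) \<and> (\<forall>k. t < k \<and> k \<le> r \<longrightarrow> n \<in> set (c k))"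
    have r1: "1 \<le> r" using d1 dn rdef by simp
    have dd: "d - 1 < d" using d1 by simp
    have topn: "c r ! (d - 1) = n" using top[OF dd] d1 dn by simp
    have tr: "t < r"
    proof (rule ccontr)
      assume "\<not> t < r"
      then have "n \<notin> set (c r)" using H r1 by auto
      moreover have "n \<in> set (c r)" using topn LEN[of r] dd by (metis nth_mem order_refl)
      ultimately show False by simp
    qed
    have t1: "1 \<le> t + 1" "t + 1 \<le> r" using tr by auto
    have "n \<in> set (c (t + 1))" using H tr by simp
    then obtain q where q: "q < d" "c (t + 1) ! q = n" using LEN[OF t1(2)] by (metis in_set_conv_nth)
    have I1: "c (t + 1) \<in> Idn d n" using CI t1 by simp
    have qd: "q = d - 1"
    proof (rule ccontr)
      assume "q \<noteq> d - 1"
      then have "q < d - 1" using q by simp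
      then have "c (t + 1) ! q < c (t + 1) ! (d - 1)" using I1 dd by (auto simp: Idn_nth)
      moreover have "c (t + 1) ! (d - 1) \<le> n" using I1 dd by (auto simp: Idn_nth)
      ultimately show False using q by simp
    qed
    have ctn: "c t ! (d - 1) \<noteq> n"
    proof (cases "t = 0")
      case True
      then show ?thesis using bot[OF dd] d1 dn by simp
    next
      case False
      then have "n \<notin> set (c t)" using H by simp
      moreover have "c t ! (d - 1) \<in> set (c t)" using LEN[of t] tr dd by simp
      ultimately show ?thesis by metis
    qed
    have u: "c (t + 1) ! (d - 1) = c t ! (d - 1) + (if p (t + 1) = d - 1 then 1 else 0)"
      using UPD[OF t1 dd] by simp
    then have pd: "p (t + 1) = d - 1" and ctv: "c t ! (d - 1) = n - 1"
      using q qd ctn by (auto split: if_splits)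
    have "sf (t + 1) = n - 1" "hf (t + 1) = d" using pd ctv d1 unfolding sf_def hf_def by auto
    then show "Some (c (t + 1)) = root_op d (n - 1) d (Some (c t))" using RO[OF t1] by simp
  qed
  show ?thesis using RO UNI III by (intro conjI exI[of _ sf] exI[of _ hf]) auto
qed



theorem proposition2p14:
  fixes d n r :: nat
  assumes "1 \<le> d" and "d < n" and "r = d * (n - d)"
  shows
   "(\<forall>i\<in>Idn d n. \<forall>j\<in>Idn d n.
        leI i j \<longleftrightarrow>
        (\<exists>ms. (\<forall>(s, h)\<in>set ms. root_valid d n s h) \<and> apply_monomial d ms (Some i) = Some j))
    \<and>
    (\<forall>c :: nat \<Rightarrow> nat list.
       (\<forall>t\<in>{1..r}. leI (c (t - 1)) (c t) \<and> c (t - 1) \<noteq> c t) \<and>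
       is_maximal_chain d n (c ` {0..r}) \<longrightarrow>
       (\<exists>sf hf :: nat \<Rightarrow> nat.
          (\<forall>t\<in>{1..r}. root_valid d n (sf t) (hf t) \<and>
                        Some (c t) = root_op d (sf t) (hf t) (Some (c (t - 1))))
        \<and> (\<forall>s h. 1 \<le> s \<and> s \<le> n - 1 \<and> 1 \<le> h \<and> h \<le> d \<and> s < n - d + h \<and> h \<le> s \<longrightarrow>
                 (\<exists>!t. t \<in> {1..r} \<and> sf t = s \<and> hf t = h)))
       \<and>
       (\<forall>t. (\<forall>k\<in>{1..t}. n \<notin> set (c k)) \<and> (\<forall>k. t < k \<and> k \<le> r \<longrightarrow> n \<in> set (c k)) \<longrightarrow>
            Some (c (t + 1)) = root_op d (n - 1) d (Some (c t))))"
proof (rule conjI)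
  show "\<forall>i\<in>Idn d n. \<forall>j\<in>Idn d n.
        leI i j \<longleftrightarrow>
        (\<exists>ms. (\<forall>(s, h)\<in>set ms. root_valid d n s h) \<and> apply_monomial d ms (Some i) = Some j)"
  proof (intro ballI)
  fix i j assume ij: "i \<in> Idn d n" "j \<in> Idn d n"
  show "leI i j \<longleftrightarrow>
        (\<exists>ms. (\<forall>(s, h)\<in>set ms. root_valid d n s h) \<and> apply_monomial d ms (Some i) = Some j)"
    using exists_monomial[OF ij _ assms(2)] mono_leI by blast
  qed
next
  show "\<forall>c :: nat \<Rightarrow> nat list.
       (\<forall>t\<in>{1..r}. leI (c (t - 1)) (c t) \<and> c (t - 1) \<noteq> c t) \<and>
       is_maximal_chain d n (c ` {0..r}) \<longrightarrow>
       (\<exists>sf hf :: nat \<Rightarrow> nat.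
          (\<forall>t\<in>{1..r}. root_valid d n (sf t) (hf t) \<and>
                        Some (c t) = root_op d (sf t) (hf t) (Some (c (t - 1))))
        \<and> (\<forall>s h. 1 \<le> s \<and> s \<le> n - 1 \<and> 1 \<le> h \<and> h \<le> d \<and> s < n - d + h \<and> h \<le> s \<longrightarrow>
                 (\<exists>!t. t \<in> {1..r} \<and> sf t = s \<and> hf t = h)))
       \<and>
       (\<forall>t. (\<forall>k\<in>{1..t}. n \<notin> set (c k)) \<and> (\<forall>k. t < k \<and> k \<le> r \<longrightarrow> n \<in> set (c k)) \<longrightarrow>
            Some (c (t + 1)) = root_op d (n - 1) d (Some (c t)))"
  proof (intro allI impI)
  fix c :: "nat \<Rightarrow> nat list"
  assume "(\<forall>t\<in>{1..r}. leI (c (t - 1)) (c t) \<and> c (t - 1) \<noteq> c t) \<and> is_maximal_chain d n (c ` {0..r})"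
  then show "(\<exists>sf hf :: nat \<Rightarrow> nat.
          (\<forall>t\<in>{1..r}. root_valid d n (sf t) (hf t) \<and>
                        Some (c t) = root_op d (sf t) (hf t) (Some (c (t - 1))))
        \<and> (\<forall>s h. 1 \<le> s \<and> s \<le> n - 1 \<and> 1 \<le> h \<and> h \<le> d \<and> s < n - d + h \<and> h \<le> s \<longrightarrow>
                 (\<exists>!t. t \<in> {1..r} \<and> sf t = s \<and> hf t = h)))
       \<and>
       (\<forall>t. (\<forall>k\<in>{1..t}. n \<notin> set (c k)) \<and> (\<forall>k. t < k \<and> k \<le> r \<longrightarrow> n \<in> set (c k)) \<longrightarrow>
            Some (c (t + 1)) = root_op d (n - 1) d (Some (c t)))"
    using chain_part[OF assms] by blast
  qed
qed

end
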